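(* Let $G=\langle L,X_u,X_c,(f_l)_{l\in L},\mathit{err}\rangle$ be a symbolic game. Let $e_1,\dots,e_n$ be Boolean functions on $\mathbb{B}^{L,X_u,X_c}$ with $\mathit{err}\equiv\bigvee_{i=1}^n e_i$. Consider the following procedure (Algorithm comp_1): 1. For each $1\le i\le n$, let $w_i=W\big(\langle\mathrm{cone}(e_i),X_u,X_c,(f_l)_{l\in\mathrm{cone}(e_i)}\rangle[\mathit{err}\leftarrow e_i]\big)\uparrow_{L,X_u,X_c}$. 2. Let $\Lambda=\bigwedge_{i=1}^n w_i$. 3. For each $l\in\mathrm{cone}(\Lambda)$, let $f'_l$ be a generalized cofactor of $f_l$ with respect to $\Lambda$. 4. Return $W\big(\langle\mathrm{cone}(\Lambda),X_u,X_c,(f'_l)_{l\in\mathrm{cone}(\Lambda)}\rangle[\mathit{err}\leftarrow\neg\Lambda]\big)\uparrow_{L,X_u,X_c}$. Then the returned set equals $W(G)$, the set of winning valuations of $G$.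
   Context: Let $\mathbb{B}=\{0,1\}$. For a finite set $A$ of Boolean variables, valuations are elements of $\mathbb{B}^A$. Sets of valuations are identified with characteristic functions $\mathbb{B}^A\to\mathbb{B}$, with $\wedge,\vee,\neg$ as intersection, union and complement. $\mathbb{B}^{A,B}=\mathbb{B}^A\times\mathbb{B}^B$. For $A\subseteq B$, $v\downarrow_A$ is the restriction of $v\in\mathbb{B}^B$ to $A$, and $f\uparrow_B(v)=f(v\downarrow_A)$ is the lifting of $f:\mathbb{B}^A\to\mathbb{B}$. Functions not depending on variables outside $A$ are identified with functions on $\mathbb{B}^A$. A symbolic game $G=\langle L,X_u,X_c,(f_l)_{l\in L},\mathit{err}\rangle$ consists of the following data: - finite pairwise disjoint variable sets $L$ (latches), $X_u$ (uncontrollable inputs) and $X_c$ (controllable inputs); - transition functions $f_l:\mathbb{B}^{L,X_u,X_c}\to\mathbb{B}$; - an error function $\mathit{err}:\mathbb{B}^{L,X_u,X_c}\to\mathbb{B}$. $\langle L',X_u,X_c,(g_l)_{l\in L'}\rangle[\mathit{err}\leftarrow e]$ is the game with latches $L'$, transitions $g_l$ and error function $e$, regarded as functions on $\mathbb{B}^{L',X_u,X_c}$. With $\delta(v)(l)=f_l(v)$, an execution from $v$ is a sequence $(v_i)_{i\in\mathbb{N}}$ with $v_0=v$ and $v_{i+1}\downarrow_L=\delta(v_i)$. It is safe if the error function is $0$ on all $v_i$. A strategy $\lambda:\mathbb{B}^{L,X_u}\to\mathbb{B}^{X_c}$ is compatible with an execution if $v_i\downarrow_{X_c}=\lambda(v_i\downarrow_L,v_i\downarrow_{X_u})$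 for all $i\ge0$. A valuation $v$ is winning if some strategy makes all compatible executions from $v$ safe. $W(\cdot)$ denotes the set of winning valuations of a game. Cone of influence: for a Boolean function $\Phi$, let $C$ be the minimal set of variables such that - $C$ contains every $x$ with $(\exists x:\Phi)\not\Leftrightarrow\Phi$, and - for each latch $y\in C$, $C$ contains every variable on which $f_y$ depends. Then $\mathrm{cone}(\Phi)=C\cap L$. A generalized cofactor of $f$ with respect to $g$ is any function $\hat f$ with $\hat f\wedge g=f\wedge g$. *)

theory Defs
  imports Main
begin

text \<open>Variables have type 'v; a valuation is a total map 'v \<Rightarrow> bool, of which only the
values on the relevant variable set matter.  A Boolean function on B^A is a function on
total valuations that depends only on the variables in A.\<close>

type_synonym 'v val = "'v \<Rightarrow> bool"
type_synonym 'v bfun = "'v val \<Rightarrow> bool"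

definition agree_on :: "'v set \<Rightarrow> 'v val \<Rightarrow> 'v val \<Rightarrow> bool" where
  "agree_on A v w \<longleftrightarrow> (\<forall>x\<in>A. v x = w x)"

definition supported_on :: "'v set \<Rightarrow> 'v bfun \<Rightarrow> bool" where
  "supported_on A g \<longleftrightarrow> (\<forall>v w. agree_on A v w \<longrightarrow> g v = g w)"

definition depends_on :: "'v bfun \<Rightarrow> 'v \<Rightarrow> bool" where
  "depends_on \<Phi> x \<longleftrightarrow> (\<exists>v b. \<Phi> (v(x := b)) \<noteq> \<Phi> v)"

inductive_set cone_vars :: "'v set \<Rightarrow> ('v \<Rightarrow> 'v bfun) \<Rightarrow> 'v bfun \<Rightarrow> 'v set"
  for L :: "'v set" and f :: "'v \<Rightarrow> 'v bfun" and \<Phi> :: "'v bfun" where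
  base: "depends_on \<Phi> x \<Longrightarrow> x \<in> cone_vars L f \<Phi>"
| step: "y \<in> cone_vars L f \<Phi> \<Longrightarrow> y \<in> L \<Longrightarrow> depends_on (f y) x \<Longrightarrow> x \<in> cone_vars L f \<Phi>"

definition cone :: "'v set \<Rightarrow> ('v \<Rightarrow> 'v bfun) \<Rightarrow> 'v bfun \<Rightarrow> 'v set" where
  "cone L f \<Phi> = cone_vars L f \<Phi> \<inter> L"

text \<open>A strategy maps valuations of L,Xu to valuations of Xc: it is a map on total
valuations whose Xc-part depends only on the L,Xu-part.\<close>
definition is_strategy :: "'v set \<Rightarrow> 'v set \<Rightarrow> 'v set \<Rightarrow> ('v val \<Rightarrow> 'v val) \<Rightarrow> bool" where
  "is_strategy L Xu Xc str \<longleftrightarrow>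
     (\<forall>v w. agree_on (L \<union> Xu) v w \<longrightarrow> agree_on Xc (str v) (str w))"

definition is_execution ::
  "'v set \<Rightarrow> 'v set \<Rightarrow> 'v set \<Rightarrow> ('v \<Rightarrow> 'v bfun) \<Rightarrow> 'v val \<Rightarrow> (nat \<Rightarrow> 'v val) \<Rightarrow> bool" where
  "is_execution L Xu Xc f v s \<longleftrightarrow>
     agree_on (L \<union> Xu \<union> Xc) (s 0) v \<and> (\<forall>i. \<forall>l\<in>L. s (Suc i) l = f l (s i))"

definition compatible :: "'v set \<Rightarrow> ('v val \<Rightarrow> 'v val) \<Rightarrow> (nat \<Rightarrow> 'v val) \<Rightarrow> bool" where
  "compatible Xc str s \<longleftrightarrow> (\<forall>i. agree_on Xc (s i) (str (s i)))"

definition safe_exec :: "'v bfun \<Rightarrow> (nat \<Rightarrow> 'v val) \<Rightarrow> bool" where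
  "safe_exec err s \<longleftrightarrow> (\<forall>i. \<not> err (s i))"

text \<open>Winning valuations of the game <L,Xu,Xc,(f l)_{l in L}>[err <- e], already lifted to
total valuations (membership depends only on the L,Xu,Xc-part).  The strategy is required
to be consistent with v at step 0 (otherwise there are no compatible executions and the
condition would be vacuous).\<close>
definition winning ::
  "'v set \<Rightarrow> 'v set \<Rightarrow> 'v set \<Rightarrow> ('v \<Rightarrow> 'v bfun) \<Rightarrow> 'v bfun \<Rightarrow> 'v val \<Rightarrow> bool" where
  "winning L Xu Xc f err v \<longleftrightarrow>
     (\<exists>str. is_strategy L Xu Xc str \<and> agree_on Xc v (str v) \<and>
        (\<forall>s. is_execution L Xu Xc f v s \<and> compatible Xc str s \<longrightarrow> safe_exec err s))"

definition symbolic_game ::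
  "'v set \<Rightarrow> 'v set \<Rightarrow> 'v set \<Rightarrow> ('v \<Rightarrow> 'v bfun) \<Rightarrow> 'v bfun \<Rightarrow> bool" where
  "symbolic_game L Xu Xc f err \<longleftrightarrow>
     finite L \<and> finite Xu \<and> finite Xc \<and>
     L \<inter> Xu = {} \<and> L \<inter> Xc = {} \<and> Xu \<inter> Xc = {} \<and>
     (\<forall>l\<in>L. supported_on (L \<union> Xu \<union> Xc) (f l)) \<and>
     supported_on (L \<union> Xu \<union> Xc) err"

end

theory Submission
  imports Defs
begin

definition inv_set :: "'v set \<Rightarrow> 'v set \<Rightarrow> 'v set \<Rightarrow> ('v \<Rightarrow> 'v bfun) \<Rightarrow> 'v bfun \<Rightarrow> 'v bfun \<Rightarrow> bool" where
  "inv_set L Xu Xc f err S \<longleftrightarrow>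
     (\<forall>u u2. S u \<longrightarrow> agree_on (L \<union> Xu \<union> Xc) u u2 \<longrightarrow> S u2) \<and>
     (\<forall>u. S u \<longrightarrow> \<not> err u) \<and>
     (\<forall>u w. S u \<longrightarrow> (\<forall>l\<in>L. w l = f l u) \<longrightarrow> (\<exists>u'. agree_on (L \<union> Xu) u' w \<and> S u'))"

lemma agree_sym: "agree_on A v w \<Longrightarrow> agree_on A w v"
  by (auto simp: agree_on_def)

lemma agree_mono: "agree_on B v w \<Longrightarrow> A \<subseteq> B \<Longrightarrow> agree_on A v w"
  by (auto simp: agree_on_def)

lemma supp_mono: "supported_on A g \<Longrightarrow> A \<subseteq> B \<Longrightarrow> supported_on B g"
  unfolding supported_on_def by (meson agree_mono)

lemma W0:
  assumes "winning L Xu Xc f err v" "agree_on (L \<union> Xu \<union> Xc) v v2"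
  shows "winning L Xu Xc f err v2"
proof -
  obtain str where s: "is_strategy L Xu Xc str" "agree_on Xc v (str v)"
    "\<forall>s. is_execution L Xu Xc f v s \<and> compatible Xc str s \<longrightarrow> safe_exec err s"
    using assms(1) unfolding winning_def by blast
  have "agree_on Xc (str v) (str v2)"
    using s(1) assms(2) unfolding is_strategy_def by (meson agree_mono sup.cobounded1)
  hence "agree_on Xc v2 (str v2)" using s(2) assms(2) by (auto simp: agree_on_def)
  moreover have "\<forall>s. is_execution L Xu Xc f v2 s \<and> compatible Xc str s \<longrightarrow> safe_exec err s"
    using s(3) assms(2) unfolding is_execution_def agree_on_def by metis
  ultimately show ?thesis using s(1) unfolding winning_def by blast
qed

lemma supp_winning: "supported_on (L \<union> Xu \<union> Xc) (winning L Xu Xc f err)"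
  unfolding supported_on_def by (meson W0 agree_sym)

lemma mono_err:
  assumes "\<forall>u. e2 u \<longrightarrow> e1 u" "winning L Xu Xc f e1 v"
  shows "winning L Xu Xc f e2 v"
  using assms unfolding winning_def safe_exec_def by blast

lemma W1:
  assumes dj: "L \<inter> Xc = {}" "Xu \<inter> Xc = {}"
  shows "inv_set L Xu Xc f err (winning L Xu Xc f err)"
proof -
  have notE: "\<not> err u" if w: "winning L Xu Xc f err u" for u
  proof -
    obtain str where s: "is_strategy L Xu Xc str" "agree_on Xc u (str u)"
      "\<forall>s. is_execution L Xu Xc f u s \<and> compatible Xc str s \<longrightarrow> safe_exec err s"
      using w unfolding winning_def by blast
    define tw where "tw = (\<lambda>x. (\<lambda>y. if y \<in> L then f y x else x y))"
    define nxt where "nxt = (\<lambda>x. (\<lambda>y. if y \<in> Xc then str (tw x) y else tw x y))"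
    define s where "s = rec_nat u (\<lambda>_ x. nxt x)"
    have s0: "s 0 = u" and sS: "\<And>i. s (Suc i) = nxt (s i)" by (simp_all add: s_def)
    have ex: "is_execution L Xu Xc f u s"
      unfolding is_execution_def agree_on_def using dj
      by (auto simp: s0 sS nxt_def tw_def)
    have ag: "agree_on (L \<union> Xu) (nxt x) (tw x)" for x
      using dj by (auto simp: agree_on_def nxt_def)
    have "agree_on Xc (nxt x) (str (nxt x))" for x
    proof -
      have "agree_on Xc (str (nxt x)) (str (tw x))"
        using s(1) ag unfolding is_strategy_def by blast
      thus ?thesis by (auto simp: agree_on_def nxt_def)
    qed
    hence "compatible Xc str s"
      unfolding compatible_def apply (intro allI) subgoal for i by (cases i) (auto simp: s0 sS s(2))
      done
    hence "safe_exec err s" using s(3) ex by blast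
    thus ?thesis unfolding safe_exec_def using s0 by metis
  qed
  have succ: "\<exists>u'. agree_on (L \<union> Xu) u' w \<and> winning L Xu Xc f err u'"
    if w: "winning L Xu Xc f err u" and wl: "\<forall>l\<in>L. w l = f l u" for u w
  proof -
    obtain str where s: "is_strategy L Xu Xc str" "agree_on Xc u (str u)"
      "\<forall>s. is_execution L Xu Xc f u s \<and> compatible Xc str s \<longrightarrow> safe_exec err s"
      using w unfolding winning_def by blast
    define u' where "u' = (\<lambda>y. if y \<in> Xc then str w y else w y)"
    have ag: "agree_on (L \<union> Xu) u' w" using dj by (auto simp: agree_on_def u'_def)
    have "agree_on Xc (str u') (str w)" using s(1) ag unfolding is_strategy_def by blast
    hence c0: "agree_on Xc u' (str u')" by (auto simp: agree_on_def u'_def)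
    have "safe_exec err t" if t: "is_execution L Xu Xc f u' t" "compatible Xc str t" for t
    proof -
      define t' where "t' = (\<lambda>i. case i of 0 \<Rightarrow> u | Suc j \<Rightarrow> t j)"
      have "is_execution L Xu Xc f u t'"
        unfolding is_execution_def
      proof (intro conjI allI ballI)
        show "agree_on (L \<union> Xu \<union> Xc) (t' 0) u" by (simp add: t'_def agree_on_def)
      next
        fix i l assume l: "l \<in> L"
        show "t' (Suc i) l = f l (t' i)"
        proof (cases i)
          case 0
          have "t 0 l = u' l" using t(1) l unfolding is_execution_def agree_on_def by blast
          also have "\<dots> = w l" using ag l by (auto simp: agree_on_def)
          finally show ?thesis using 0 wl l by (simp add: t'_def)
        next
          case (Suc j) thus ?thesis using t(1) l unfolding is_execution_def by (simp add: t'_def)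
        qed
      qed
      moreover have "compatible Xc str t'"
        using t(2) s(2) unfolding compatible_def
        apply (intro allI) subgoal for i by (cases i) (auto simp: t'_def) done
      ultimately have "safe_exec err t'" using s(3) by blast
      thus ?thesis unfolding safe_exec_def t'_def by (metis old.nat.simps(5))
    qed
    hence "winning L Xu Xc f err u'" unfolding winning_def using s(1) c0 by blast
    thus ?thesis using ag by blast
  qed
  show ?thesis unfolding inv_set_def using W0 notE succ by blast
qed

lemma W2:
  assumes inv: "inv_set L Xu Xc f err S" and v: "S v"
  shows "winning L Xu Xc f err v"
proof -
  have cl: "\<And>u u2. S u \<Longrightarrow> agree_on (L \<union> Xu \<union> Xc) u u2 \<Longrightarrow> S u2"
    and ne: "\<And>u. S u \<Longrightarrow> \<not> err u"
    and sc: "\<And>u w. S u \<Longrightarrow> (\<forall>l\<in>L. w l = f l u) \<Longrightarrow> (\<exists>u'. agree_on (L \<union> Xu) u' w \<and> S u')"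
    using inv unfolding inv_set_def by blast+
  define restr where "restr = (\<lambda>u::'a val. (\<lambda>x. if x \<in> L \<union> Xu then u x else False))"
  define h where "h = (\<lambda>r. if agree_on (L \<union> Xu) r v then v else (SOME u'. agree_on (L \<union> Xu) u' r \<and> S u'))"
  define str where "str = (\<lambda>u. h (restr u))"
  have ar: "agree_on (L \<union> Xu) a (restr x) \<longleftrightarrow> agree_on (L \<union> Xu) a x" for a x
    by (auto simp: agree_on_def restr_def)
  have ar2: "agree_on (L \<union> Xu) (restr x) a \<longleftrightarrow> agree_on (L \<union> Xu) x a" for a x
    by (auto simp: agree_on_def restr_def)
  have rs: "agree_on (L \<union> Xu) x y \<Longrightarrow> restr x = restr y" for x y
    by (auto simp: agree_on_def restr_def)
  have strok: "S (str x) \<and> agree_on (L \<union> Xu) (str x) x"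
    if "\<exists>u'. agree_on (L \<union> Xu) u' x \<and> S u'" for x
  proof (cases "agree_on (L \<union> Xu) (restr x) v")
    case True thus ?thesis using v ar2 agree_sym by (simp add: str_def h_def) blast
  next
    case False
    hence "str x = (SOME u'. agree_on (L \<union> Xu) u' (restr x) \<and> S u')" by (simp add: str_def h_def)
    moreover have "\<exists>u'. agree_on (L \<union> Xu) u' (restr x) \<and> S u'" using that ar by blast
    ultimately show ?thesis using ar by (metis (mono_tags, lifting) someI_ex)
  qed
  have isstr: "is_strategy L Xu Xc str"
    unfolding is_strategy_def str_def
  proof (intro allI impI)
    fix a b assume "agree_on (L \<union> Xu) a b"
    hence "restr a = restr b" by (rule rs)
    thus "agree_on Xc (h (restr a)) (h (restr b))" by (simp add: agree_on_def)
  qed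
  have sv: "str v = v"
    by (simp add: str_def h_def restr_def agree_on_def)
  have "safe_exec err s" if ex: "is_execution L Xu Xc f v s" and c: "compatible Xc str s" for s
  proof -
    have "S (s i)" for i
    proof (induction i)
      case 0
      thus ?case using ex v cl agree_sym unfolding is_execution_def by blast
    next
      case (Suc i)
      have "\<forall>l\<in>L. s (Suc i) l = f l (s i)" using ex unfolding is_execution_def by blast
      then obtain u' where "agree_on (L \<union> Xu) u' (s (Suc i)) \<and> S u'" using sc Suc by blast
      hence st: "S (str (s (Suc i))) \<and> agree_on (L \<union> Xu) (str (s (Suc i))) (s (Suc i))"
        using strok by blast
      have "agree_on Xc (s (Suc i)) (str (s (Suc i)))" using c unfolding compatible_def by blast
      hence "agree_on (L \<union> Xu \<union> Xc) (str (s (Suc i))) (s (Suc i))"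
        using st by (auto simp: agree_on_def)
      thus ?case using cl st by blast
    qed
    thus ?thesis unfolding safe_exec_def using ne by blast
  qed
  thus ?thesis unfolding winning_def using isstr sv by (auto simp: agree_on_def)
qed


lemma dep_supp:
  assumes fin: "finite A" and sup: "supported_on A g"
  shows "supported_on {x\<in>A. depends_on g x} g"
proof -
  have "\<forall>v w. agree_on (A - B) v w \<longrightarrow> g v = g w" if "finite B" "B \<subseteq> {x\<in>A. \<not> depends_on g x}" for B
    using that
  proof (induction B rule: finite_induct)
    case empty thus ?case using sup by (simp add: supported_on_def)
  next
    case (insert x B)
    show ?case
    proof (intro allI impI)
      fix v w assume a: "agree_on (A - insert x B) v w"
      have "agree_on (A - B) (v(x := w x)) w" using a by (auto simp: agree_on_def)
      hence "g (v(x := w x)) = g w" using insert by blast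
      moreover have "g (v(x := w x)) = g v" using insert(4) unfolding depends_on_def by blast
      ultimately show "g v = g w" by simp
    qed
  qed
  moreover have "finite {x\<in>A. \<not> depends_on g x}" using fin by simp
  ultimately have "\<forall>v w. agree_on (A - {x\<in>A. \<not> depends_on g x}) v w \<longrightarrow> g v = g w" by blast
  moreover have "A - {x\<in>A. \<not> depends_on g x} = {x\<in>A. depends_on g x}" by blast
  ultimately show ?thesis unfolding supported_on_def by simp
qed

lemma cone_supp:
  assumes fin: "finite (L \<union> Xu \<union> Xc)"
    and fs: "\<forall>l\<in>L. supported_on (L \<union> Xu \<union> Xc) (f l)"
    and gs: "supported_on (L \<union> Xu \<union> Xc) g"
  shows "supported_on (cone L f g \<union> Xu \<union> Xc) g"
    "\<forall>l\<in>cone L f g. supported_on (cone L f g \<union> Xu \<union> Xc) (f l)"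
proof -
  show "supported_on (cone L f g \<union> Xu \<union> Xc) g"
  proof (rule supp_mono[OF dep_supp[OF fin gs]])
    show "{x \<in> L \<union> Xu \<union> Xc. depends_on g x} \<subseteq> cone L f g \<union> Xu \<union> Xc"
      by (auto simp: cone_def intro: cone_vars.base)
  qed
  show "\<forall>l\<in>cone L f g. supported_on (cone L f g \<union> Xu \<union> Xc) (f l)"
  proof
    fix l assume l: "l \<in> cone L f g"
    hence "l \<in> cone_vars L f g" "l \<in> L" by (auto simp: cone_def)
    show "supported_on (cone L f g \<union> Xu \<union> Xc) (f l)"
    proof (rule supp_mono[OF dep_supp[OF fin]])
      show "supported_on (L \<union> Xu \<union> Xc) (f l)" using fs \<open>l \<in> L\<close> by blast
      show "{x \<in> L \<union> Xu \<union> Xc. depends_on (f l) x} \<subseteq> cone L f g \<union> Xu \<union> Xc"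
        using \<open>l \<in> cone_vars L f g\<close> \<open>l \<in> L\<close>
        by (auto simp: cone_def intro: cone_vars.step)
    qed
  qed
qed

lemma proj:
  assumes CL: "C \<subseteq> L" and dj: "L \<inter> Xc = {}" "Xu \<inter> Xc = {}"
    and game_dj: "L \<inter> Xu = {}"
    and fs: "\<forall>l\<in>C. supported_on (C \<union> Xu \<union> Xc) (f l)"
    and es: "supported_on (C \<union> Xu \<union> Xc) e"
  shows "winning L Xu Xc f e v \<longleftrightarrow> winning C Xu Xc f e v"
proof
  assume v: "winning L Xu Xc f e v"
  define S where "S = winning L Xu Xc f e"
  have iS: "inv_set L Xu Xc f e S" unfolding S_def by (rule W1[OF dj])
  have ne: "\<And>u. S u \<Longrightarrow> \<not> e u"
    and sc: "\<And>u w. S u \<Longrightarrow> (\<forall>l\<in>L. w l = f l u) \<Longrightarrow> (\<exists>u'. agree_on (L \<union> Xu) u' w \<and> S u')"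
    using iS unfolding inv_set_def by blast+
  define T where "T = (\<lambda>u. \<exists>u0. S u0 \<and> agree_on (C \<union> Xu \<union> Xc) u u0)"
  have "inv_set C Xu Xc f e T"
    unfolding inv_set_def
  proof (intro conjI allI impI)
    fix u u2 assume "T u" "agree_on (C \<union> Xu \<union> Xc) u u2"
    thus "T u2" unfolding T_def agree_on_def by metis
  next
    fix u assume "T u"
    then obtain u0 where u0: "S u0" "agree_on (C \<union> Xu \<union> Xc) u u0" unfolding T_def by blast
    have "e u = e u0" using es u0(2) unfolding supported_on_def by blast
    thus "\<not> e u" using ne u0(1) by simp
  next
    fix u w assume "T u" and wl: "\<forall>l\<in>C. w l = f l u"
    then obtain u0 where u0: "S u0" "agree_on (C \<union> Xu \<union> Xc) u u0" unfolding T_def by blast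
    define w0 where "w0 = (\<lambda>x. if x \<in> L then f x u0 else w x)"
    obtain u0' where u0': "agree_on (L \<union> Xu) u0' w0" "S u0'"
      using sc[OF u0(1), of w0] unfolding w0_def by auto
    have fe: "f l u = f l u0" if "l \<in> C" for l using fs that u0(2) unfolding supported_on_def by blast
    have "agree_on (C \<union> Xu) u0' w"
      unfolding agree_on_def
    proof
      fix x assume x: "x \<in> C \<union> Xu"
      have "u0' x = w0 x" using u0'(1) x CL unfolding agree_on_def by blast
      moreover have "w0 x = w x"
      proof (cases "x \<in> C")
        case True thus ?thesis using wl fe CL by (auto simp: w0_def)
      next
        case False
        hence "x \<in> Xu" using x by blast
        hence "x \<notin> L" using game_dj by blast
        thus ?thesis by (simp add: w0_def)
      qed
      ultimately show "u0' x = w x" by simp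
    qed
    moreover have "T u0'" unfolding T_def using u0'(2) by (auto simp: agree_on_def)
    ultimately show "\<exists>u'. agree_on (C \<union> Xu) u' w \<and> T u'" by blast
  qed
  moreover have "T v" unfolding T_def using v S_def by (auto simp: agree_on_def)
  ultimately show "winning C Xu Xc f e v" by (rule W2)
next
  assume v: "winning C Xu Xc f e v"
  define T where "T = winning C Xu Xc f e"
  have djC: "C \<inter> Xc = {}" using CL dj by blast
  have iT: "inv_set C Xu Xc f e T" unfolding T_def by (rule W1[OF djC dj(2)])
  have cl: "\<And>u u2. T u \<Longrightarrow> agree_on (C \<union> Xu \<union> Xc) u u2 \<Longrightarrow> T u2"
    and ne: "\<And>u. T u \<Longrightarrow> \<not> e u"
    and sc: "\<And>u w. T u \<Longrightarrow> (\<forall>l\<in>C. w l = f l u) \<Longrightarrow> (\<exists>u'. agree_on (C \<union> Xu) u' w \<and> T u')"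
    using iT unfolding inv_set_def by blast+
  have "inv_set L Xu Xc f e T"
    unfolding inv_set_def
  proof (intro conjI allI impI)
    fix u u2 assume "T u" "agree_on (L \<union> Xu \<union> Xc) u u2"
    thus "T u2" using cl CL agree_mono by (metis Un_mono subset_refl)
  next
    fix u assume "T u" thus "\<not> e u" by (rule ne)
  next
    fix u w assume "T u" and wl: "\<forall>l\<in>L. w l = f l u"
    then obtain u' where u': "agree_on (C \<union> Xu) u' w" "T u'" using sc CL by blast
    define u'' where "u'' = (\<lambda>x. if x \<in> L \<union> Xu then w x else u' x)"
    have "agree_on (C \<union> Xu \<union> Xc) u' u''" using u'(1) CL dj unfolding agree_on_def u''_def by auto
    hence "T u''" using cl u'(2) by blast
    moreover have "agree_on (L \<union> Xu) u'' w" by (simp add: agree_on_def u''_def)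
    ultimately show "\<exists>u'. agree_on (L \<union> Xu) u' w \<and> T u'" by blast
  qed
  thus "winning L Xu Xc f e v" using v T_def W2 by metis
qed

lemma cof:
  assumes dj: "C \<inter> Xc = {}" "Xu \<inter> Xc = {}"
    and eq: "\<forall>l\<in>C. \<forall>u. \<Lambda> u \<longrightarrow> f2 l u = f1 l u"
    and v: "winning C Xu Xc f1 (\<lambda>v. \<not> \<Lambda> v) v"
  shows "winning C Xu Xc f2 (\<lambda>v. \<not> \<Lambda> v) v"
proof -
  define S where "S = winning C Xu Xc f1 (\<lambda>v. \<not> \<Lambda> v)"
  have iS: "inv_set C Xu Xc f1 (\<lambda>v. \<not> \<Lambda> v) S" unfolding S_def by (rule W1[OF dj])
  have "inv_set C Xu Xc f2 (\<lambda>v. \<not> \<Lambda> v) S"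
    using iS eq unfolding inv_set_def by simp
  thus ?thesis using W2 v S_def by metis
qed


theorem theorem1:
  fixes L Xu Xc :: "'v set"
    and f f' :: "'v \<Rightarrow> 'v bfun"
    and err :: "'v bfun"
    and e :: "nat \<Rightarrow> 'v bfun"
    and n :: nat
    and w :: "nat \<Rightarrow> 'v bfun"
    and \<Lambda> :: "'v bfun"
  assumes game: "symbolic_game L Xu Xc f err"
    and e_fun: "\<forall>i\<in>{1..n}. supported_on (L \<union> Xu \<union> Xc) (e i)"
    and err_eq: "\<forall>v. err v = (\<exists>i\<in>{1..n}. e i v)"
    and w_def: "\<forall>i\<in>{1..n}. w i = winning (cone L f (e i)) Xu Xc f (e i)"
    and Lambda_def: "\<Lambda> = (\<lambda>v. \<forall>i\<in>{1..n}. w i v)"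
    and f'_fun: "\<forall>l\<in>cone L f \<Lambda>. supported_on (cone L f \<Lambda> \<union> Xu \<union> Xc) (f' l)"
    and f'_cof: "\<forall>l\<in>cone L f \<Lambda>. \<forall>v. (f' l v \<and> \<Lambda> v) = (f l v \<and> \<Lambda> v)"
  shows "{v. winning (cone L f \<Lambda>) Xu Xc f' (\<lambda>v. \<not> \<Lambda> v) v} = {v. winning L Xu Xc f err v}"
proof -
  have fin: "finite (L \<union> Xu \<union> Xc)" and dLu: "L \<inter> Xu = {}" and dLc: "L \<inter> Xc = {}"
    and duc: "Xu \<inter> Xc = {}" and fs: "\<forall>l\<in>L. supported_on (L \<union> Xu \<union> Xc) (f l)"
    using game unfolding symbolic_game_def by auto
  have coneL: "cone L f g \<subseteq> L" for g by (auto simp: cone_def)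
  have djc: "cone L f g \<inter> Xc = {}" for g using coneL dLc by blast
  have wi_ne: "\<not> e i u" if "i \<in> {1..n}" "w i u" for i u
  proof -
    have "inv_set (cone L f (e i)) Xu Xc f (e i) (winning (cone L f (e i)) Xu Xc f (e i))"
      by (rule W1[OF djc duc])
    thus ?thesis using that w_def unfolding inv_set_def by auto
  qed
  have err_L: "\<And>u. err u \<Longrightarrow> \<not> \<Lambda> u" using err_eq wi_ne Lambda_def by blast
  have wsupp: "supported_on (L \<union> Xu \<union> Xc) (w i)" if "i \<in> {1..n}" for i
  proof -
    have "supported_on (cone L f (e i) \<union> Xu \<union> Xc) (w i)" using supp_winning w_def that by metis
    thus ?thesis by (rule supp_mono) (use coneL in blast)
  qed
  have Lsupp: "supported_on (L \<union> Xu \<union> Xc) \<Lambda>"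
    using wsupp unfolding supported_on_def Lambda_def by blast
  have nLsupp: "supported_on (L \<union> Xu \<union> Xc) (\<lambda>v. \<not> \<Lambda> v)"
    using Lsupp unfolding supported_on_def by blast
  have G_L: "\<Lambda> u" if "winning L Xu Xc f err u" for u
  proof -
    have "w i u" if i: "i \<in> {1..n}" for i
    proof -
      have "winning L Xu Xc f (e i) u" using mono_err[OF _ \<open>winning L Xu Xc f err u\<close>] err_eq i by blast
      moreover have "supported_on (cone L f (e i) \<union> Xu \<union> Xc) (e i)"
        "\<forall>l\<in>cone L f (e i). supported_on (cone L f (e i) \<union> Xu \<union> Xc) (f l)"
        using cone_supp[OF fin fs] e_fun i by auto
      ultimately have "winning (cone L f (e i)) Xu Xc f (e i) u"
        using proj[OF coneL dLc duc dLu] by blast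
      thus ?thesis using w_def i by simp
    qed
    thus ?thesis using Lambda_def by simp
  qed
  have step1: "winning L Xu Xc f err v \<longleftrightarrow> winning L Xu Xc f (\<lambda>v. \<not> \<Lambda> v) v" for v
  proof
    assume v: "winning L Xu Xc f err v"
    have "inv_set L Xu Xc f err (winning L Xu Xc f err)" by (rule W1[OF dLc duc])
    hence "inv_set L Xu Xc f (\<lambda>v. \<not> \<Lambda> v) (winning L Xu Xc f err)"
      using G_L unfolding inv_set_def by blast
    thus "winning L Xu Xc f (\<lambda>v. \<not> \<Lambda> v) v" using W2 v by metis
  next
    assume "winning L Xu Xc f (\<lambda>v. \<not> \<Lambda> v) v"
    thus "winning L Xu Xc f err v" using mono_err err_L by metis
  qed
  have cs: "supported_on (cone L f \<Lambda> \<union> Xu \<union> Xc) (\<lambda>v. \<not> \<Lambda> v)"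
    "\<forall>l\<in>cone L f \<Lambda>. supported_on (cone L f \<Lambda> \<union> Xu \<union> Xc) (f l)"
    using cone_supp[OF fin fs Lsupp] unfolding supported_on_def by auto
  have step2: "winning L Xu Xc f (\<lambda>v. \<not> \<Lambda> v) v \<longleftrightarrow> winning (cone L f \<Lambda>) Xu Xc f (\<lambda>v. \<not> \<Lambda> v) v" for v
    using proj[OF coneL dLc duc dLu cs(2) cs(1)] .
  have eq1: "\<forall>l\<in>cone L f \<Lambda>. \<forall>u. \<Lambda> u \<longrightarrow> f' l u = f l u" using f'_cof by blast
  have eq2: "\<forall>l\<in>cone L f \<Lambda>. \<forall>u. \<Lambda> u \<longrightarrow> f l u = f' l u" using f'_cof by blast
  have step3: "winning (cone L f \<Lambda>) Xu Xc f (\<lambda>v. \<not> \<Lambda> v) v \<longleftrightarrow> winning (cone L f \<Lambda>) Xu Xc f' (\<lambda>v. \<not> \<Lambda> v) v" for v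
    using cof[OF djc duc eq1] cof[OF djc duc eq2] by blast
  show ?thesis using step1 step2 step3 by blast
qed

end
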